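(* Let $C$ be a $d$-dimensional copula such that for each $j\in\{1,\dots,d\}$ the partial derivative $\dot C_j=\partial C/\partial u_j$ exists and is continuous on $\{\vec u\in[0,1]^d:u_j\in(0,1)\}$ (with $\dot C_j:=0$ on $\{u_j\in\{0,1\}\}$). Let $\alpha^\star_n\in\mathcal D^\star_n$ for every $n$ and $\alpha^\star\in\mathcal D^\star_0$ with $\sup_{\Delta\times[0,1]^d}|\alpha^\star_n-\alpha^\star|\to0$. Then $g_n(\alpha^\star_n)\to g(\alpha^\star)$ uniformly on $\Delta\times[0,1]^d$, where $g(\alpha^\star)(s,t,\vec u)=\alpha^\star(s,t,\vec u)-\sum_{j=1}^d\dot C_j(\vec u)\alpha^\star(s,t,\vec u^{(j)})$.
   Context: $\Delta=\{(s,t)\in[0,1]^2:s\le t\}$, $\lambda_n(s,t)=(\lfloor nt\rfloor-\lfloor ns\rfloor)/n$. $\mathcal E$ is the set of right-continuous nondecreasing $F:[0,1]\to[0,1]$ with $F(0)=0$, $F(1)=1$. $\mathcal E^\star_n$ is the set of $F^\star:\Delta\times[0,1]\to[0,1]$ such that $u\mapsto\lambda_n(s,t)^{-1}F^\star(s,t,u)\in\mathcal E$ when $\lfloor ns\rfloor<\lfloor nt\rfloor$ and $F^\star(s,t,\cdot)=0$ when $\lfloor ns\rfloor=\lfloor nt\rfloor$. For $F^\star\in\mathcal E^\star_n$, $I_n(F^\star)(s,t,u)=\inf\{v\in[0,1]:F^\star(s,t,v)\ge\lambda_n(s,t)u\}$. For $H^\star:\Delta\times[0,1]^d\to\mathbb{R}$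 and $j\in\{1,\dots,d\}$, $H^\star_j(s,t,u)=H^\star(s,t,\vec u_{\{j\}})$ with $\vec u_{\{j\}}$ the vector with $j$th component $u$ and others $1$. $\mathcal E^\star_{n,d}=\{H^\star:\Delta\times[0,1]^d\to[0,1]: H^\star_j\in\mathcal E^\star_n\ \forall j\}$, and $\Phi_n(H^\star)(s,t,\vec u)=H^\star\{s,t,I_n(H^\star_1)(s,t,u_1),\dots,I_n(H^\star_d)(s,t,u_d)\}$. $C^\star_n(s,t,\vec u)=\lambda_n(s,t)C(\vec u)$. $\mathcal D^\star$ is the set of bounded $\alpha^\star$ on $\Delta\times[0,1]^d$ with $\alpha^\star(s,t,\cdot)=0$ if $s=t$, and $\alpha^\star(s,t,\vec u)=0$ if $s<t$ and either some component of $\vec u$ is $0$ or $\vec u=(1,\dots,1)$. $\mathcal D^\star_n=\{\alpha^\star\in\mathcal D^\star:C^\star_n+n^{-1/2}\alpha^\star\in\mathcal E^\star_{n,d}\}$, $\mathcal D^\star_0=\mathcal D^\star\cap\mathcal C(\Delta\times[0,1]^d)$. For $\alpha^\star_n\in\mathcal D^\star_n$, $g_n(\alpha^\star_n)=\sqrt n\{\Phi_n(C^\star_n+n^{-1/2}\alpha^\star_n)-\Phi_n(C^\star_n)\}$. $\vec u^{(j)}$ is the vector with $j$th component $u_j$ and all others $1$. *)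

theory Defs
  imports "HOL-Analysis.Analysis"
begin

text \<open>Vectors in [0,1]^d are modelled as real^'d for a finite index type 'd.
  Functions on Delta x [0,1]^d are curried: s t u.\<close>

definition unit_cube :: "(real^'d) set" where
  "unit_cube = {u. \<forall>j. 0 \<le> u$j \<and> u$j \<le> 1}"

definition Delta :: "(real \<times> real) set" where
  "Delta = {(s,t). 0 \<le> s \<and> s \<le> t \<and> t \<le> 1}"

definition lam :: "nat \<Rightarrow> real \<Rightarrow> real \<Rightarrow> real" where
  "lam n s t = (real_of_int \<lfloor>real n * t\<rfloor> - real_of_int \<lfloor>real n * s\<rfloor>) / real n"

definition vec1 :: "'d \<Rightarrow> real \<Rightarrow> real^'d" where
  "vec1 j x = (\<chi> i. if i = j then x else 1)"

definition is_copula :: "(real^'d \<Rightarrow> real) \<Rightarrow> bool" where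
  "is_copula C \<longleftrightarrow>
     (\<forall>u\<in>unit_cube. (\<exists>j. u$j = 0) \<longrightarrow> C u = 0) \<and>
     (\<forall>j. \<forall>x\<in>{0..1}. C (vec1 j x) = x) \<and>
     (\<forall>a\<in>unit_cube. \<forall>b\<in>unit_cube. (\<forall>i. a$i \<le> b$i) \<longrightarrow>
        0 \<le> (\<Sum>S\<in>Pow (UNIV::'d set).
               (-1) ^ card (UNIV - S) * C (\<chi> i. if i \<in> S then b$i else a$i)))"

definition pdC :: "(real^'d \<Rightarrow> real) \<Rightarrow> 'd \<Rightarrow> real^'d \<Rightarrow> real" where
  "pdC C j u = (if 0 < u$j \<and> u$j < 1
      then deriv (\<lambda>x. C (\<chi> i. if i = j then x else u$i)) (u$j) else 0)"

definition isE :: "(real \<Rightarrow> real) \<Rightarrow> bool" where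
  "isE F \<longleftrightarrow> (\<forall>x\<in>{0..1}. F x \<in> {0..1}) \<and> mono_on {0..1} F \<and>
     (\<forall>x\<in>{0..1}. continuous (at x within {x..1}) F) \<and> F 0 = 0 \<and> F 1 = 1"

definition isEstar :: "nat \<Rightarrow> (real \<Rightarrow> real \<Rightarrow> real \<Rightarrow> real) \<Rightarrow> bool" where
  "isEstar n F \<longleftrightarrow> (\<forall>(s,t)\<in>Delta.
      (\<forall>u\<in>{0..1}. F s t u \<in> {0..1}) \<and>
      (if \<lfloor>real n * s\<rfloor> < \<lfloor>real n * t\<rfloor>
       then isE (\<lambda>u. F s t u / lam n s t)
       else (\<forall>u\<in>{0..1}. F s t u = 0)))"

definition In :: "nat \<Rightarrow> (real \<Rightarrow> real \<Rightarrow> real \<Rightarrow> real) \<Rightarrow> real \<Rightarrow> real \<Rightarrow> real \<Rightarrow> real" where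
  "In n F s t u = Inf {v \<in> {0..1}. F s t v \<ge> lam n s t * u}"

definition marg :: "(real \<Rightarrow> real \<Rightarrow> real^'d \<Rightarrow> real) \<Rightarrow> 'd \<Rightarrow> real \<Rightarrow> real \<Rightarrow> real \<Rightarrow> real" where
  "marg H j s t x = H s t (vec1 j x)"

definition isEstar_d :: "nat \<Rightarrow> (real \<Rightarrow> real \<Rightarrow> real^'d \<Rightarrow> real) \<Rightarrow> bool" where
  "isEstar_d n H \<longleftrightarrow> (\<forall>(s,t)\<in>Delta. \<forall>u\<in>unit_cube. H s t u \<in> {0..1}) \<and>
     (\<forall>j. isEstar n (marg H j))"

definition Phi :: "nat \<Rightarrow> (real \<Rightarrow> real \<Rightarrow> real^'d \<Rightarrow> real) \<Rightarrow> real \<Rightarrow> real \<Rightarrow> real^'d \<Rightarrow> real" where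
  "Phi n H s t u = H s t (\<chi> j. In n (marg H j) s t (u$j))"

definition Cstar :: "nat \<Rightarrow> (real^'d \<Rightarrow> real) \<Rightarrow> real \<Rightarrow> real \<Rightarrow> real^'d \<Rightarrow> real" where
  "Cstar n C s t u = lam n s t * C u"

definition Dstar :: "(real \<Rightarrow> real \<Rightarrow> real^'d \<Rightarrow> real) \<Rightarrow> bool" where
  "Dstar a \<longleftrightarrow> (\<exists>B. \<forall>(s,t)\<in>Delta. \<forall>u\<in>unit_cube. \<bar>a s t u\<bar> \<le> B) \<and>
     (\<forall>(s,t)\<in>Delta. \<forall>u\<in>unit_cube.
        (s = t \<longrightarrow> a s t u = 0) \<and>
        (s < t \<and> ((\<exists>j. u$j = 0) \<or> u = (\<chi> j. 1)) \<longrightarrow> a s t u = 0))"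

definition Dstar_n :: "nat \<Rightarrow> (real^'d \<Rightarrow> real) \<Rightarrow> (real \<Rightarrow> real \<Rightarrow> real^'d \<Rightarrow> real) \<Rightarrow> bool" where
  "Dstar_n n C a \<longleftrightarrow> Dstar a \<and>
     isEstar_d n (\<lambda>s t u. Cstar n C s t u + a s t u / sqrt (real n))"

definition Dstar0 :: "(real \<Rightarrow> real \<Rightarrow> real^'d \<Rightarrow> real) \<Rightarrow> bool" where
  "Dstar0 a \<longleftrightarrow> Dstar a \<and>
     continuous_on {((s,t),u). (s,t) \<in> Delta \<and> u \<in> unit_cube} (\<lambda>((s,t),u). a s t u)"

definition gn :: "nat \<Rightarrow> (real^'d \<Rightarrow> real) \<Rightarrow> (real \<Rightarrow> real \<Rightarrow> real^'d \<Rightarrow> real) \<Rightarrow> real \<Rightarrow> real \<Rightarrow> real^'d \<Rightarrow> real" where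
  "gn n C a s t u = sqrt (real n) *
     (Phi n (\<lambda>s t u. Cstar n C s t u + a s t u / sqrt (real n)) s t u - Phi n (Cstar n C) s t u)"

definition glim :: "(real^'d \<Rightarrow> real) \<Rightarrow> (real \<Rightarrow> real \<Rightarrow> real^'d \<Rightarrow> real) \<Rightarrow> real \<Rightarrow> real \<Rightarrow> real^'d \<Rightarrow> real" where
  "glim C a s t u = a s t u - (\<Sum>j\<in>UNIV. pdC C j u * a s t (\<chi> i. if i = j then u$i else 1))"

end

theory Submission
  imports Defs
begin


definition upd :: "real^'d \<Rightarrow> 'd \<Rightarrow> real \<Rightarrow> real^'d" where
  "upd x j c = (\<chi> i. if i = j then c else x$i)"

lemma upd_nth[simp]: "upd x j c $ i = (if i = j then c else x$i)"
  by (simp add: upd_def)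

lemma cube_upd: "x \<in> unit_cube \<Longrightarrow> 0 \<le> c \<Longrightarrow> c \<le> 1 \<Longrightarrow> upd x j c \<in> unit_cube"
  by (simp add: unit_cube_def)

lemma sum2: "A \<noteq> B \<Longrightarrow> (\<Sum>S\<in>{A,B}. f S) = f A + f B" by simp
lemma sum4: "A \<noteq> B \<Longrightarrow> A \<noteq> C \<Longrightarrow> A \<noteq> D \<Longrightarrow> B \<noteq> C \<Longrightarrow> B \<noteq> D \<Longrightarrow> C \<noteq> D \<Longrightarrow>
  (\<Sum>S\<in>{A,B,C,D}. f S) = f A + f B + f C + f D" by (simp add: algebra_simps)

lemma box_reduce:
  fixes C :: "real^'d \<Rightarrow> real"
  assumes cop: "is_copula C" and a: "a \<in> unit_cube" and b: "b \<in> unit_cube"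
    and ab: "\<forall>i. a$i \<le> b$i" and z: "\<forall>k. k \<notin> K \<longrightarrow> a$k = 0"
  shows "0 \<le> (\<Sum>S\<in>{S. UNIV - K \<subseteq> S}.
               (-1) ^ card (UNIV - S) * C (\<chi> i. if i \<in> S then b$i else a$i))"
proof -
  have g: "\<forall>u\<in>unit_cube. (\<exists>j. u$j = 0) \<longrightarrow> C u = 0" using cop by (simp add: is_copula_def)
  have "0 \<le> (\<Sum>S\<in>Pow (UNIV::'d set).
               (-1) ^ card (UNIV - S) * C (\<chi> i. if i \<in> S then b$i else a$i))"
    using cop a b ab by (simp add: is_copula_def)
  also have "\<dots> = (\<Sum>S\<in>{S. UNIV - K \<subseteq> S}.
               (-1) ^ card (UNIV - S) * C (\<chi> i. if i \<in> S then b$i else a$i))"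
  proof (rule sum.mono_neutral_right)
    show "{S. UNIV - K \<subseteq> S} \<subseteq> Pow UNIV" by auto
    show "\<forall>S\<in>Pow UNIV - {S. UNIV - K \<subseteq> S}.
       (- 1) ^ card (UNIV - S) * C (\<chi> i. if i \<in> S then b $ i else a $ i) = 0"
    proof
      fix S assume "S \<in> Pow UNIV - {S. UNIV - K \<subseteq> (S::'d set)}"
      then obtain k where k: "k \<notin> K" "k \<notin> S" by auto
      have "(\<chi> i. if i \<in> S then b$i else a$i) \<in> unit_cube"
        using a b by (auto simp: unit_cube_def)
      moreover have "(\<chi> i. if i \<in> S then b$i else a$i) $ k = 0" using k z by auto
      ultimately have "C (\<chi> i. if i \<in> S then b$i else a$i) = 0" using g by blast
      then show "(- 1) ^ card (UNIV - S) * C (\<chi> i. if i \<in> S then b $ i else a $ i) = 0" by simp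
    qed
  qed simp
  finally show ?thesis .
qed

lemma cop_mono:
  fixes C :: "real^'d \<Rightarrow> real"
  assumes cop: "is_copula C" and x: "x \<in> unit_cube" and yz: "0 \<le> y" "y \<le> z" "z \<le> 1"
  shows "C (upd x j y) \<le> C (upd x j z)"
proof -
  have e: "{S. UNIV - {j} \<subseteq> S} = {UNIV, UNIV - {j}}" by auto
  have "0 \<le> (\<Sum>S\<in>{S. UNIV - {j} \<subseteq> S}.
               (-1) ^ card (UNIV - S) * C (\<chi> i. if i \<in> S then (upd x j z)$i else (upd 0 j y)$i))"
    apply (rule box_reduce[OF cop])
    using x yz by (auto simp: unit_cube_def)
  also have "\<dots> = C (upd x j z) - C (upd x j y)"
  proof -
    have ne: "UNIV \<noteq> UNIV - {j}" by auto
    have c: "UNIV - (UNIV - {j}) = {j}" by auto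
    have v1: "(\<chi> i. if i \<in> UNIV then (upd x j z)$i else (upd 0 j y)$i) = upd x j z" by (simp add: vec_eq_iff)
    have v2: "(\<chi> i. if i \<in> UNIV - {j} then (upd x j z)$i else (upd 0 j y)$i) = upd x j y" by (simp add: vec_eq_iff)
    show ?thesis unfolding e sum2[OF ne] by (simp only: c v1 v2, simp)
  qed
  finally show ?thesis by simp
qed

lemma cop_mono2:
  fixes C :: "real^'d \<Rightarrow> real"
  assumes cop: "is_copula C" and x: "x \<in> unit_cube" and yz: "0 \<le> y" "y \<le> z" "z \<le> 1"
    and pq: "0 \<le> p" "p \<le> q" "q \<le> 1" and ij: "i \<noteq> j"
  shows "C (upd (upd x i p) j z) - C (upd (upd x i p) j y) \<le> C (upd (upd x i q) j z) - C (upd (upd x i q) j y)"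
proof -
  have e: "{S. UNIV - {i,j} \<subseteq> S} = {UNIV, UNIV - {i}, UNIV - {j}, UNIV - {i,j}}" by auto
  let ?a = "upd (upd 0 i p) j y" and ?b = "upd (upd x i q) j z"
  have "0 \<le> (\<Sum>S\<in>{S. UNIV - {i,j} \<subseteq> S}.
               (-1) ^ card (UNIV - S) * C (\<chi> k. if k \<in> S then ?b$k else ?a$k))"
    apply (rule box_reduce[OF cop])
    using x yz pq by (auto simp: unit_cube_def)
  also have "\<dots> = C (upd (upd x i q) j z) - C (upd (upd x i q) j y) - (C (upd (upd x i p) j z) - C (upd (upd x i p) j y))"
  proof -
    have c1: "UNIV - (UNIV - {i}) = {i}" "UNIV - (UNIV - {j}) = {j}" "UNIV - (UNIV - {i,j}) = {i,j}" by auto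
    have v1: "(\<chi> k. if k \<in> UNIV then ?b$k else ?a$k) = ?b" by (simp add: vec_eq_iff)
    have v2: "(\<chi> k. if k \<in> UNIV - {i} then ?b$k else ?a$k) = upd (upd x i p) j z" using ij by (simp add: vec_eq_iff)
    have v3: "(\<chi> k. if k \<in> UNIV - {j} then ?b$k else ?a$k) = upd (upd x i q) j y" using ij by (simp add: vec_eq_iff)
    have v4: "(\<chi> k. if k \<in> UNIV - {i,j} then ?b$k else ?a$k) = upd (upd x i p) j y" using ij by (simp add: vec_eq_iff)
    have d: "UNIV \<noteq> UNIV - {i}" "UNIV \<noteq> UNIV - {j}" "UNIV \<noteq> UNIV - {i,j}"
       "UNIV - {i} \<noteq> UNIV - {j}" "UNIV - {i} \<noteq> UNIV - {i,j}" "UNIV - {j} \<noteq> UNIV - {i,j}"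
      using ij by auto
    show ?thesis unfolding e sum4[OF d] by (simp only: c1 v1 v2 v3 v4, simp add: card_insert_if ij)
  qed
  finally show ?thesis by simp
qed

lemma cop_lip:
  fixes C :: "real^'d \<Rightarrow> real"
  assumes cop: "is_copula C" and x: "x \<in> unit_cube" and yz: "0 \<le> y" "y \<le> z" "z \<le> 1"
  shows "C (upd x j z) - C (upd x j y) \<le> z - y"
proof -
  define g where "g w = C (upd w j z) - C (upd w j y)" for w
  define xT where "xT T = (\<chi> i. if i \<in> T then 1 else x$i)" for T
  have xTc: "xT T \<in> unit_cube" for T using x by (auto simp: xT_def unit_cube_def)
  have "finite T \<Longrightarrow> g x \<le> g (xT T)" for T
  proof (induction T rule: finite_induct)
    case empty
    have "xT {} = x" by (simp add: xT_def vec_eq_iff)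
    then show ?case by simp
  next
    case (insert i T)
    have e1: "xT (insert i T) = upd (xT T) i 1" by (simp add: xT_def vec_eq_iff)
    have e2: "xT T = upd (xT T) i (xT T $ i)" by (simp add: vec_eq_iff)
    have "g (xT T) \<le> g (xT (insert i T))"
    proof (cases "i = j")
      case True
      have "upd (upd (xT T) i 1) j c = upd (xT T) j c" for c using True by (simp add: vec_eq_iff)
      then show ?thesis unfolding e1 g_def by simp
    next
      case False
      have p: "0 \<le> xT T $ i" "xT T $ i \<le> 1" using xTc[of T] by (auto simp: unit_cube_def)
      have "g (upd (xT T) i (xT T $ i)) \<le> g (upd (xT T) i 1)"
        unfolding g_def by (rule cop_mono2[OF cop xTc yz p]) (use False in auto)
      then show ?thesis using e1 e2 by simp
    qed
    then show ?case using insert by simp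
  qed
  then have "g x \<le> g (xT UNIV)" by simp
  moreover have "upd (xT UNIV) j c = vec1 j c" for c by (simp add: xT_def vec1_def vec_eq_iff)
  moreover have "C (vec1 j c) = c" if "c \<in> {0..1}" for c using cop that by (simp add: is_copula_def)
  ultimately show ?thesis using yz unfolding g_def by simp
qed

lemma cop_lip_abs:
  fixes C :: "real^'d \<Rightarrow> real"
  assumes cop: "is_copula C" and x: "x \<in> unit_cube" and yz: "0 \<le> y" "y \<le> 1" "0 \<le> z" "z \<le> 1"
  shows "\<bar>C (upd x j z) - C (upd x j y)\<bar> \<le> \<bar>z - y\<bar>"
proof (cases "y \<le> z")
  case True
  then show ?thesis using cop_lip[OF cop x, of y z j] cop_mono[OF cop x, of y z j] yz by simp
next
  case False
  then show ?thesis using cop_lip[OF cop x, of z y j] cop_mono[OF cop x, of z y j] yz by simp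
qed

lemma cop_cont:
  fixes C :: "real^'d \<Rightarrow> real"
  assumes cop: "is_copula C" and x: "x \<in> unit_cube"
  shows "continuous_on {0..1} (\<lambda>c. C (upd x j c))"
  unfolding continuous_on_iff
proof (intro ballI allI impI)
  fix c e assume c: "c \<in> {0..(1::real)}" and e: "0 < (e::real)"
  show "\<exists>d>0. \<forall>x'\<in>{0..1}. dist x' c < d \<longrightarrow> dist (C (upd x j x')) (C (upd x j c)) < e"
  proof (intro exI[of _ e] conjI ballI impI)
    fix x' :: real assume "x' \<in> {0..1}" "dist x' c < e"
    then show "dist (C (upd x j x')) (C (upd x j c)) < e"
      using cop_lip_abs[OF cop x, of c x' j] c by (simp add: dist_real_def)
  qed (use e in auto)
qed

lemma pd_deriv:
  fixes C :: "real^'d \<Rightarrow> real"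
  shows "pdC C j (upd x j c) = (if 0 < c \<and> c < 1 then deriv (\<lambda>w. C (upd x j w)) c else 0)"
proof -
  have "(\<lambda>w. C (\<chi> i. if i = j then w else upd x j c $ i)) = (\<lambda>w. C (upd x j w))"
    by (intro ext arg_cong[where f=C]) (simp add: vec_eq_iff)
  then show ?thesis by (simp add: pdC_def)
qed

lemma cop_diff:
  fixes C :: "real^'d \<Rightarrow> real"
  assumes diff: "\<And>j u. u \<in> unit_cube \<Longrightarrow> 0 < u$j \<Longrightarrow> u$j < 1 \<Longrightarrow>
                 (\<lambda>x. C (\<chi> i. if i = j then x else u$i)) differentiable (at (u$j))"
    and x: "x \<in> unit_cube" and c: "0 < c" "c < 1"
  shows "(\<lambda>w. C (upd x j w)) differentiable (at c)"
proof -
  have u: "upd x j c \<in> unit_cube" using x c by (simp add: cube_upd)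
  have "(\<lambda>w. C (\<chi> i. if i = j then w else upd x j c $ i)) = (\<lambda>w. C (upd x j w))"
    by (intro ext arg_cong[where f=C]) (simp add: vec_eq_iff)
  then show ?thesis using diff[OF u, of j] c by simp
qed

lemma pdC_bound:
  fixes C :: "real^'d \<Rightarrow> real"
  assumes cop: "is_copula C"
    and diff: "\<And>j u. u \<in> unit_cube \<Longrightarrow> 0 < u$j \<Longrightarrow> u$j < 1 \<Longrightarrow>
                 (\<lambda>x. C (\<chi> i. if i = j then x else u$i)) differentiable (at (u$j))"
    and u: "u \<in> unit_cube"
  shows "\<bar>pdC C j u\<bar> \<le> 1"
proof -
  have uu: "upd u j (u$j) = u" by (simp add: vec_eq_iff)
  show ?thesis
  proof (cases "0 < u$j \<and> u$j < 1")
    case False then show ?thesis unfolding pdC_def by auto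
  next
    case True
    define f where "f w = C (upd u j w)" for w
    define x where "x = u$j"
    have "f differentiable (at x)" unfolding f_def x_def using cop_diff[OF diff u] True by blast
    then obtain D where D: "(f has_real_derivative D) (at x)"
      using real_differentiable_def by blast
    have pd: "pdC C j u = D" using pd_deriv[of C j u "u$j"] uu True D DERIV_imp_deriv
      unfolding f_def x_def by metis
    have lim: "((\<lambda>h. \<bar>(f (x + h) - f x) / h\<bar>) \<longlongrightarrow> \<bar>D\<bar>) (at 0)"
      using D unfolding DERIV_def by (rule tendsto_rabs)
    have ev: "eventually (\<lambda>h. \<bar>(f (x + h) - f x) / h\<bar> \<le> 1) (at 0)"
      unfolding eventually_at
    proof (intro exI[of _ "min x (1 - x)"] conjI allI impI ballI)
      show "0 < min x (1 - x)" using True x_def by simp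
      fix h :: real assume h: "h \<noteq> 0 \<and> dist h 0 < min x (1 - x)"
      have "\<bar>f (x + h) - f x\<bar> \<le> \<bar>x + h - x\<bar>" unfolding f_def
        apply (rule cop_lip_abs[OF cop u]) using h True x_def by (auto simp: dist_real_def)
      then show "\<bar>(f (x + h) - f x) / h\<bar> \<le> 1" using h by (simp add: abs_divide divide_le_eq_1)
    qed
    have "\<bar>D\<bar> \<le> 1" by (rule tendsto_upperbound[OF lim ev]) simp
    then show ?thesis using pd by simp
  qed
qed

lemma cop_mvt:
  fixes C :: "real^'d \<Rightarrow> real"
  assumes cop: "is_copula C"
    and diff: "\<And>j u. u \<in> unit_cube \<Longrightarrow> 0 < u$j \<Longrightarrow> u$j < 1 \<Longrightarrow>
                 (\<lambda>x. C (\<chi> i. if i = j then x else u$i)) differentiable (at (u$j))"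
    and x: "x \<in> unit_cube" and yz: "0 \<le> y" "y \<le> 1" "0 \<le> z" "z \<le> 1"
  shows "\<exists>\<xi>. (y \<noteq> z \<longrightarrow> 0 < \<xi> \<and> \<xi> < 1) \<and> \<bar>\<xi> - y\<bar> \<le> \<bar>z - y\<bar> \<and>
           C (upd x j z) - C (upd x j y) = pdC C j (upd x j \<xi>) * (z - y)"
proof -
  define f where "f w = C (upd x j w)" for w
  have aux: "\<exists>\<xi>. p < \<xi> \<and> \<xi> < q \<and> f q - f p = (q - p) * pdC C j (upd x j \<xi>)"
    if pq: "0 \<le> p" "p < q" "q \<le> 1" for p q
  proof -
    have "continuous_on {p..q} f" unfolding f_def
      by (rule continuous_on_subset[OF cop_cont[OF cop x]]) (use pq in auto)
    moreover have "f differentiable (at w)" if "p < w" "w < q" for w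
      unfolding f_def by (rule cop_diff[OF diff x]) (use that pq in auto)
    ultimately obtain l w where w: "p < w" "w < q" "DERIV f w :> l" "f q - f p = (q - p) * l"
      using MVT[OF pq(2)] by blast
    have "pdC C j (upd x j w) = l" using pd_deriv[of C j x w] w pq DERIV_imp_deriv
      unfolding f_def by (metis order.strict_trans1 order.strict_trans2)
    then show ?thesis using w by blast
  qed
  consider "y = z" | "y < z" | "z < y" by linarith
  then show ?thesis
  proof cases
    case 1 then show ?thesis by (intro exI[of _ y]) simp
  next
    case 2
    then obtain w where "y < w" "w < z" "f z - f y = (z - y) * pdC C j (upd x j w)"
      using aux[of y z] yz by blast
    then show ?thesis using yz unfolding f_def by (intro exI[of _ w]) auto
  next
    case 3
    then obtain w where "z < w" "w < y" "f y - f z = (y - z) * pdC C j (upd x j w)"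
      using aux[of z y] yz by blast
    then show ?thesis using yz unfolding f_def by (intro exI[of _ w]) (auto simp: algebra_simps)
  qed
qed

lemma telescope:
  fixes C :: "real^'d \<Rightarrow> real"
  assumes u: "u \<in> unit_cube" and v: "v \<in> unit_cube"
    and E: "\<And>j x. x \<in> unit_cube \<Longrightarrow> (\<forall>i. x$i = u$i \<or> x$i = v$i) \<Longrightarrow>
       \<bar>C (upd x j (v$j)) - C (upd x j (u$j)) - P j * (v$j - u$j)\<bar> \<le> E j"
  shows "\<bar>C v - C u - (\<Sum>j\<in>UNIV. P j * (v$j - u$j))\<bar> \<le> (\<Sum>j\<in>UNIV. E j)"
proof -
  define w where "w T = (\<chi> i. if i \<in> T then v$i else u$i)" for T
  have wc: "w T \<in> unit_cube" for T using u v by (auto simp: w_def unit_cube_def)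
  have "finite T \<Longrightarrow> \<bar>C (w T) - C u - (\<Sum>j\<in>T. P j * (v$j - u$j))\<bar> \<le> (\<Sum>j\<in>T. E j)" for T
  proof (induction T rule: finite_induct)
    case empty
    have "w {} = u" by (simp add: w_def vec_eq_iff)
    then show ?case by simp
  next
    case (insert j T)
    have e1: "w (insert j T) = upd (w T) j (v$j)" by (simp add: w_def vec_eq_iff)
    have e2: "w T = upd (w T) j (u$j)" using insert by (simp add: w_def vec_eq_iff)
    have "\<bar>C (upd (w T) j (v$j)) - C (upd (w T) j (u$j)) - P j * (v$j - u$j)\<bar> \<le> E j"
      by (rule E[OF wc]) (auto simp: w_def)
    then have "\<bar>C (w (insert j T)) - C (w T) - P j * (v$j - u$j)\<bar> \<le> E j"
      using e1 e2 by metis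
    then show ?case using insert by (simp add: abs_le_iff)
  qed
  moreover have "w UNIV = v" by (simp add: w_def vec_eq_iff)
  ultimately show ?thesis by (metis finite)
qed

lemma quant:
  fixes G :: "real \<Rightarrow> real"
  assumes c: "c > 0" and u: "0 \<le> u" "u \<le> 1" and G0: "G 0 = 0" and G1: "G 1 = 0"
  defines "q \<equiv> Inf {v\<in>{0..1}. c * (v - u) \<ge> - G v}"
  shows quant_range: "0 \<le> q \<and> q \<le> 1"
    and quant_bound: "(\<forall>v\<in>{0..1}. \<bar>G v\<bar> \<le> K) \<Longrightarrow> \<bar>c * (q - u)\<bar> \<le> K"
    and quant_approx: "(\<forall>v\<in>{0..1}. \<bar>v - u\<bar> < \<tau> \<longrightarrow> \<bar>G v - g0\<bar> \<le> \<kappa>) \<Longrightarrow> \<bar>q - u\<bar> < \<tau>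
        \<Longrightarrow> \<bar>c * (q - u) + g0\<bar> \<le> \<kappa>"
proof -
  define S where "S = {v\<in>{0..1}. c * (v - u) \<ge> - G v}"
  have qS: "q = Inf S" unfolding q_def S_def ..
  have S1: "1 \<in> S" using u c G1 by (simp add: S_def)
  have bdd: "bdd_below S" unfolding S_def by (rule bdd_belowI[of _ 0]) auto
  have ne: "S \<noteq> {}" using S1 by auto
  have rng: "0 \<le> q \<and> q \<le> 1"
    unfolding qS using S1 bdd by (auto intro!: cInf_greatest cInf_lower simp: S_def)
  then show "0 \<le> q \<and> q \<le> 1" .
  have b: "\<exists>v\<in>S. v < q + h" if "h > 0" for h
    using cInf_less_iff[OF ne bdd, of "q + h"] that qS by simp
  have cc: "c * (v - u) < - G v" if "v \<in> {0..1}" "v < q" for v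
  proof (rule ccontr)
    assume "\<not> c * (v - u) < - G v"
    then have "v \<in> S" using that by (simp add: S_def)
    then have "q \<le> v" unfolding qS using bdd by (rule cInf_lower)
    then show False using that by simp
  qed
  have inS: "v \<in> S \<Longrightarrow> c * (v - u) \<ge> - G v \<and> q \<le> v \<and> 0 \<le> v \<and> v \<le> 1" for v
  proof -
    assume v: "v \<in> S"
    then have "q \<le> v" unfolding qS using bdd by (rule cInf_lower)
    then show ?thesis using v by (simp add: S_def)
  qed
  show "\<bar>c * (q - u)\<bar> \<le> K" if K: "\<forall>v\<in>{0..1}. \<bar>G v\<bar> \<le> K"
  proof -
    have K0: "0 \<le> K" using K[rule_format, of 0] by simp
    have lo: "c * (q - u) \<ge> - K"
    proof (rule ccontr)
      assume A: "\<not> c * (q - u) \<ge> - K"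
      define h where "h = (- K - c * (q - u)) / c"
      have h: "h > 0" using A c by (simp add: h_def field_simps)
      obtain v where v: "v \<in> S" "v < q + h" using b[OF h] by blast
      have "c * (v - u) < c * (q + h - u)" using v c by simp
      also have "\<dots> = - K" using c by (simp add: h_def field_simps)
      finally show False using inS[OF v(1)] K by force
    qed
    have hi: "c * (q - u) \<le> K"
    proof (rule ccontr)
      assume A: "\<not> c * (q - u) \<le> K"
      define v where "v = q - (c * (q - u) - K) / (2 * c)"
      have cv: "c * (v - u) = (c * (q - u) + K) / 2" using c by (simp add: v_def field_simps)
      have "c * (v - u) > 0" using cv A K0 by simp
      then have "v > u" using c by (simp add: zero_less_mult_iff)
      moreover have "v < q" using A c by (simp add: v_def field_simps)
      ultimately have "c * (v - u) < - G v" using cc rng u by simp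
      moreover have "- G v \<le> K" using K[rule_format, of v] \<open>v > u\<close> \<open>v < q\<close> rng u by simp
      ultimately show False using cv A by simp
    qed
    show ?thesis using lo hi by simp
  qed
  show "\<bar>c * (q - u) + g0\<bar> \<le> \<kappa>" if K: "\<forall>v\<in>{0..1}. \<bar>v - u\<bar> < \<tau> \<longrightarrow> \<bar>G v - g0\<bar> \<le> \<kappa>"
     and qu: "\<bar>q - u\<bar> < \<tau>"
  proof -
    have lo: "c * (q - u) + g0 \<ge> - \<kappa>"
    proof (rule ccontr)
      assume A: "\<not> c * (q - u) + g0 \<ge> - \<kappa>"
      define h where "h = min (\<tau> - \<bar>q - u\<bar>) ((- \<kappa> - g0 - c * (q - u)) / c)"
      have h: "h > 0" using A c qu by (simp add: h_def field_simps)
      obtain v where v: "v \<in> S" "v < q + h" using b[OF h] by blast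
      have vS: "c * (v - u) \<ge> - G v" "q \<le> v" "0 \<le> v" "v \<le> 1" using inS[OF v(1)] by auto
      have "h \<le> \<tau> - \<bar>q - u\<bar>" by (simp add: h_def)
      then have "\<bar>v - u\<bar> < \<tau>" using v(2) vS(2) qu by linarith
      then have "\<bar>G v - g0\<bar> \<le> \<kappa>" using K vS by simp
      have "c * (v - u) < c * (q + h - u)" using v c by simp
      also have "\<dots> \<le> - \<kappa> - g0"
      proof -
        have "h \<le> (- \<kappa> - g0 - c * (q - u)) / c" by (simp add: h_def)
        then have "c * h \<le> - \<kappa> - g0 - c * (q - u)" using c by (simp add: field_simps)
        then show ?thesis by (simp add: algebra_simps)
      qed
      finally show False using vS \<open>\<bar>G v - g0\<bar> \<le> \<kappa>\<close> by (simp add: abs_le_iff)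
    qed
    have hi: "c * (q - u) + g0 \<le> \<kappa>"
    proof (rule ccontr)
      assume A: "\<not> c * (q - u) + g0 \<le> \<kappa>"
      show False
      proof (cases "q = 0")
        case True
        then have "\<bar>G 0 - g0\<bar> \<le> \<kappa>" using K qu by simp
        moreover have "c * u \<ge> 0" using c u by simp
        ultimately show False using A True G0 by (simp add: abs_le_iff)
      next
        case False
        then have q0: "q > 0" using rng by simp
        define h where "h = min (min q (\<tau> - \<bar>q - u\<bar>)) ((c * (q - u) + g0 - \<kappa>) / c)"
        have h: "h > 0" using A c qu q0 by (simp add: h_def field_simps)
        define v where "v = q - h / 2"
        have "h \<le> q" by (simp add: h_def)
        then have v01: "0 \<le> v" "v \<le> 1" "v < q" using h rng by (auto simp: v_def)
        have "h \<le> \<tau> - \<bar>q - u\<bar>" by (simp add: h_def)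
        then have "\<bar>v - u\<bar> < \<tau>" unfolding v_def using h qu by linarith
        then have Gv: "\<bar>G v - g0\<bar> \<le> \<kappa>" using K v01 by simp
        have cv: "c * (v - u) < - G v" using cc v01 by simp
        have "h \<le> (c * (q - u) + g0 - \<kappa>) / c" by (simp add: h_def)
        then have "c * h \<le> c * (q - u) + g0 - \<kappa>" using c by (simp add: field_simps)
        moreover have "c * h > 0" using c h by simp
        moreover have "c * (v - u) = c * (q - u) - c * h / 2" unfolding v_def by (simp add: algebra_simps)
        ultimately have "c * (v - u) > \<kappa> - g0" by linarith
        then show False using cv Gv by (simp add: abs_le_iff)
      qed
    qed
    show ?thesis using lo hi by simp
  qed
qed



lemma dist_l1: "dist (x::real^'d) y \<le> (\<Sum>i\<in>UNIV. \<bar>x$i - y$i\<bar>)"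
  using norm_le_l1_cart[of "x - y"] by (simp add: dist_norm)

lemma dist_pair_same: "dist ((p::real\<times>real), (x::real^'d)) (p, y) = dist x y"
  by (simp add: dist_Pair_Pair)

lemma dist_vec1: "dist (vec1 j v) (vec1 j w :: real^'d) \<le> \<bar>v - w\<bar>"
proof -
  have "(\<Sum>i\<in>UNIV. \<bar>vec1 j v $ i - vec1 j w $ i\<bar>) = (\<Sum>i\<in>UNIV. if i = j then \<bar>v - w\<bar> else 0)"
    by (intro sum.cong) (auto simp: vec1_def)
  also have "\<dots> = \<bar>v - w\<bar>" by simp
  finally show ?thesis using dist_l1[of "vec1 j v" "vec1 j w"] by simp
qed

lemma cube_vec1: "0 \<le> v \<Longrightarrow> v \<le> 1 \<Longrightarrow> vec1 j v \<in> unit_cube"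
  by (simp add: vec1_def unit_cube_def)

lemma vec1_one: "vec1 j 1 = (\<chi> i. 1)"
  by (simp add: vec1_def vec_eq_iff)

lemma vec1_u: "(\<chi> i. if i = j then u$i else 1) = vec1 j (u$j)"
  by (simp add: vec1_def vec_eq_iff)

lemma cube_cbox: "unit_cube = cbox (0::real^'d) (\<chi> i. 1)"
  by (auto simp: unit_cube_def mem_box_cart)

lemma compact_Delta: "compact Delta"
proof -
  have "Delta = {p. 0 \<le> fst p} \<inter> {p. fst p \<le> snd p} \<inter> {p::real\<times>real. snd p \<le> 1}"
    by (auto simp: Delta_def)
  moreover have "closed \<dots>"
    by (intro closed_Int closed_Collect_le continuous_intros)
  moreover have "bounded Delta"
    unfolding bounded_iff
  proof (intro exI[of _ 2] ballI)
    fix p assume "p \<in> Delta"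
    then have "norm (fst p) \<le> 1" "norm (snd p) \<le> 1" by (auto simp: Delta_def)
    then show "norm p \<le> 2" using norm_Pair_le[of "fst p" "snd p"] by simp
  qed
  ultimately show ?thesis by (metis compact_eq_bounded_closed)
qed

theorem lemmaB1:
  fixes C :: "real^'d \<Rightarrow> real"
    and alpha :: "nat \<Rightarrow> real \<Rightarrow> real \<Rightarrow> real^'d \<Rightarrow> real"
    and a :: "real \<Rightarrow> real \<Rightarrow> real^'d \<Rightarrow> real"
  assumes cop: "is_copula C"
    and diff: "\<And>j u. u \<in> unit_cube \<Longrightarrow> 0 < u$j \<Longrightarrow> u$j < 1 \<Longrightarrow>
                 (\<lambda>x. C (\<chi> i. if i = j then x else u$i)) differentiable (at (u$j))"
    and cont: "\<And>j. continuous_on {u \<in> unit_cube. 0 < u$j \<and> u$j < 1} (pdC C j)"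
    and an: "\<And>n. n \<ge> 1 \<Longrightarrow> Dstar_n n C (alpha n)"
    and a0: "Dstar0 a"
    and conv: "\<And>e. e > 0 \<Longrightarrow> \<forall>\<^sub>F n in sequentially.
                 \<forall>(s,t)\<in>Delta. \<forall>u\<in>unit_cube. \<bar>alpha n s t u - a s t u\<bar> < e"
  shows "\<forall>e>0. \<forall>\<^sub>F n in sequentially.
           \<forall>(s,t)\<in>Delta. \<forall>u\<in>unit_cube. \<bar>gn n C (alpha n) s t u - glim C a s t u\<bar> < e"
proof (intro allI impI)
  fix e :: real assume e: "e > 0"
  define D where "D = real CARD('d)"
  have D1: "D \<ge> 1" unfolding D_def using zero_less_card_finite[where 'a='d] by linarith
  have dA: "Dstar a" and ca: "continuous_on {((s,t),u). (s,t) \<in> Delta \<and> u \<in> unit_cube} (\<lambda>((s,t),u). a s t u)"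
    using a0 by (auto simp: Dstar0_def)
  obtain A where A: "\<And>s t u. (s,t) \<in> Delta \<Longrightarrow> u \<in> unit_cube \<Longrightarrow> \<bar>a s t u\<bar> \<le> A"
    using dA unfolding Dstar_def by fast
  have az: "\<And>s t u. (s,t) \<in> Delta \<Longrightarrow> u \<in> unit_cube \<Longrightarrow>
     (s = t \<longrightarrow> a s t u = 0) \<and> (s < t \<and> ((\<exists>j. u$j = 0) \<or> u = (\<chi> j. 1)) \<longrightarrow> a s t u = 0)"
    using dA unfolding Dstar_def by fast
  have D00: "(0,0) \<in> Delta" by (simp add: Delta_def)
  have c0: "(0::real^'d) \<in> unit_cube" by (simp add: unit_cube_def)
  have A0: "A \<ge> 0" using A[OF D00 c0] by simp
  define eps where "eps = min 1 (e / (4 * (D + 1) * (A + 8)))"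
  have epos: "eps > 0" using e D1 A0 by (simp add: eps_def)
  have e1: "eps \<le> 1" by (simp add: eps_def)
  have ee: "4 * (D + 1) * (A + 8) * eps \<le> e"
  proof -
    have "eps \<le> e / (4 * (D + 1) * (A + 8))" by (simp add: eps_def)
    moreover have "4 * (D + 1) * (A + 8) > 0" using D1 A0 by simp
    ultimately show ?thesis by (simp add: pos_le_divide_eq mult.commute)
  qed
  have "(D + 1) * (A + 8) * eps > 0" using epos D1 A0 by simp
  then have ee2: "(D + 1) * (A + 8) * eps < e" using ee by linarith
  have Qeq: "{((s,t),u). (s,t) \<in> Delta \<and> u \<in> unit_cube} = Delta \<times> (unit_cube :: (real^'d) set)" by auto
  have cQ: "compact (Delta \<times> (unit_cube :: (real^'d) set))"
    by (intro compact_Times compact_Delta) (simp add: cube_cbox)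
  have uca: "uniformly_continuous_on (Delta \<times> unit_cube) (\<lambda>((s,t),u). a s t u)"
    using ca unfolding Qeq by (rule compact_uniformly_continuous[OF _ cQ])
  obtain da where da0: "da > 0" and da: "\<And>s t u s' t' u'. (s,t) \<in> Delta \<Longrightarrow> u \<in> unit_cube \<Longrightarrow>
      (s',t') \<in> Delta \<Longrightarrow> u' \<in> unit_cube \<Longrightarrow> dist ((s',t'),u') ((s,t),u) < da \<Longrightarrow> \<bar>a s' t' u' - a s t u\<bar> < eps"
  proof -
    obtain d where d: "d > 0" "\<forall>x\<in>Delta \<times> unit_cube. \<forall>x'\<in>Delta \<times> unit_cube. dist x' x < d \<longrightarrow>
        dist ((\<lambda>((s,t),u). a s t u) x') ((\<lambda>((s,t),u). a s t u) x) < eps"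
      using uca epos unfolding uniformly_continuous_on_def by blast
    show ?thesis
    proof (rule that[OF d(1)])
      fix s t s' t' :: real and u u' :: "real^'d" assume "(s,t) \<in> Delta" "u \<in> unit_cube" "(s',t') \<in> Delta" "u' \<in> unit_cube"
        "dist ((s',t'),u') ((s,t),u) < d"
      then show "\<bar>a s' t' u' - a s t u\<bar> < eps" using d(2)[rule_format, of "((s,t),u)" "((s',t'),u')"]
        by (simp add: dist_real_def)
    qed
  qed
  have B1: "\<bar>a s t x\<bar> < eps" if "(s,t) \<in> Delta" "t - s < da" "x \<in> unit_cube" for s t x
  proof -
    have ss: "(s,s) \<in> Delta" using that by (auto simp: Delta_def)
    have "dist ((s,t),x) ((s,s),x) = \<bar>t - s\<bar>" by (simp add: dist_Pair_Pair dist_real_def)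
    then have "\<bar>a s t x - a s s x\<bar> < eps" using da[OF ss that(3) that(1) that(3)] that by (auto simp: Delta_def)
    then show ?thesis using az[OF ss that(3)] by simp
  qed
  have A2: "\<bar>a s t x - a s t y\<bar> < eps" if "(s,t) \<in> Delta" "x \<in> unit_cube" "y \<in> unit_cube" "dist x y < da" for s t x y
    using da[OF that(1,3,1,2)] that(4) by (simp add: dist_pair_same)
  define eta where "eta = min da (1/2)"
  have eta: "eta > 0" "eta \<le> da" "eta \<le> 1/2" using da0 by (auto simp: eta_def)
  define K where "K j = {u \<in> unit_cube. eta/2 \<le> u$j \<and> u$j \<le> 1 - eta/2}" for j :: 'd
  have Kc: "compact (K j)" for j
  proof -
    have "K j = cbox (\<chi> i. if i = j then eta/2 else 0) (\<chi> i. if i = j then 1 - eta/2 else 1)"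
    proof (intro set_eqI iffI)
      fix x assume "x \<in> K j" then show "x \<in> cbox (\<chi> i. if i = j then eta/2 else 0) (\<chi> i. if i = j then 1 - eta/2 else 1)"
        by (auto simp: K_def unit_cube_def mem_box_cart)
    next
      fix x assume R: "x \<in> cbox (\<chi> i. if i = j then eta/2 else 0) (\<chi> i. if i = j then 1 - eta/2 else 1)"
      have "0 \<le> x$i \<and> x$i \<le> 1" for i using R eta unfolding mem_box_cart
        by (cases "i = j") (auto dest: spec[of _ i])
      moreover have "eta/2 \<le> x$j \<and> x$j \<le> 1 - eta/2" using R unfolding mem_box_cart
        by (auto dest: spec[of _ j])
      ultimately show "x \<in> K j" by (auto simp: K_def unit_cube_def)
    qed
    then show ?thesis by simp
  qed
  have Ksub: "K j \<subseteq> {u \<in> unit_cube. 0 < u$j \<and> u$j < 1}" for j using eta by (auto simp: K_def)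
  have "\<forall>j. \<exists>d>0. \<forall>x\<in>K j. \<forall>y\<in>K j. dist x y < d \<longrightarrow> \<bar>pdC C j x - pdC C j y\<bar> < eps"
  proof
    fix j
    have "uniformly_continuous_on (K j) (pdC C j)"
      by (rule compact_uniformly_continuous[OF continuous_on_subset[OF cont Ksub] Kc])
    then obtain d where "d > 0" "\<forall>x\<in>K j. \<forall>x'\<in>K j. dist x' x < d \<longrightarrow> dist (pdC C j x') (pdC C j x) < eps"
      using epos unfolding uniformly_continuous_on_def by blast
    then show "\<exists>d>0. \<forall>x\<in>K j. \<forall>y\<in>K j. dist x y < d \<longrightarrow> \<bar>pdC C j x - pdC C j y\<bar> < eps"
      by (auto simp: dist_real_def)
  qed
  then obtain dp where dp: "\<And>j. dp j > 0" "\<And>j x y. x \<in> K j \<Longrightarrow> y \<in> K j \<Longrightarrow> dist x y < dp j \<Longrightarrow> \<bar>pdC C j x - pdC C j y\<bar> < eps"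
    by metis
  define dc where "dc = Min (range dp)"
  have dc0: "dc > 0" unfolding dc_def using dp(1) by (simp add: Min_gr_iff)
  have dcle: "dc \<le> dp j" for j unfolding dc_def by simp
  define tau where "tau = min (da / (2*D)) (min (eta/2) (dc / (2*D)))"
  have tau0: "tau > 0" using da0 eta dc0 D1 by (simp add: tau_def)
  have tau1: "D * tau \<le> da / 2" "D * tau \<le> dc / 2" "tau \<le> eta / 2"
  proof -
    have "tau \<le> da / (2*D)" "tau \<le> dc / (2*D)" by (auto simp: tau_def)
    then show "D * tau \<le> da / 2" "D * tau \<le> dc / 2" using D1 by (simp_all add: field_simps)
    show "tau \<le> eta / 2" by (simp add: tau_def)
  qed
  define Z where "Z = 2 * (A + 1) / (da * tau)"
  define Y where "Y = max (2 / da + 1) (Z^2)"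
  obtain N0 where N0: "\<And>n. n \<ge> N0 \<Longrightarrow> \<forall>(s,t)\<in>Delta. \<forall>u\<in>unit_cube. \<bar>alpha n s t u - a s t u\<bar> < eps"
    using conv[OF epos] unfolding eventually_sequentially by blast
  show "\<forall>\<^sub>F n in sequentially.
           \<forall>(s,t)\<in>Delta. \<forall>u\<in>unit_cube. \<bar>gn n C (alpha n) s t u - glim C a s t u\<bar> < e"
    unfolding eventually_sequentially
  proof (intro exI[of _ "max N0 (max 1 (nat \<lceil>Y\<rceil>))"] allI impI)
    fix n assume nN: "max N0 (max 1 (nat \<lceil>Y\<rceil>)) \<le> n"
    then have n1: "n \<ge> 1" and nY: "real n \<ge> Y" and nN0: "n \<ge> N0"
      by (auto simp: nat_le_iff ceiling_le_iff)
    have convn: "\<And>s t u. (s,t) \<in> Delta \<Longrightarrow> u \<in> unit_cube \<Longrightarrow> \<bar>alpha n s t u - a s t u\<bar> < eps"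
      using N0[OF nN0] by fast
    have nda: "1 / real n < da / 2"
    proof -
      have "real n > 2 / da" using nY unfolding Y_def by linarith
      then have "2 < real n * da" using da0 by (simp add: field_simps)
      then show ?thesis using n1 da0 by (simp add: field_simps)
    qed
    have rZ: "sqrt (real n) \<ge> Z"
    proof -
      have "Z^2 \<le> real n" using nY unfolding Y_def by linarith
      then have "sqrt (Z^2) \<le> sqrt (real n)" by (rule real_sqrt_le_mono)
      then show ?thesis by simp
    qed
    have core: "\<bar>gn n C (alpha n) s t u - glim C a s t u\<bar> < e" if st: "(s,t) \<in> Delta" and u: "u \<in> unit_cube" for s t u

    proof -
      define r where "r = sqrt (real n)"
      have r0: "r > 0" using n1 by (simp add: r_def)
      define b where "b = alpha n"
      define lm where "lm = lam n s t"
      define H where "H = (\<lambda>s t u. Cstar n C s t u + b s t u / r)"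
      have Dn: "Dstar b" "isEstar_d n H" using an[OF n1] unfolding Dstar_n_def b_def H_def r_def by auto
      have hb: "\<bar>b s t x - a s t x\<bar> < eps" if "x \<in> unit_cube" for x
        using convn[OF st that] by (simp add: b_def)
      have bz: "(s = t \<longrightarrow> b s t x = 0) \<and> (s < t \<and> ((\<exists>j. x$j = 0) \<or> x = (\<chi> j. 1)) \<longrightarrow> b s t x = 0)"
        if "x \<in> unit_cube" for x using Dn(1) st that unfolding Dstar_def by fast
      have Ast: "\<bar>a s t x\<bar> \<le> A" if "x \<in> unit_cube" for x using A[OF st that] .
      have gn_eq: "gn n C (alpha n) s t u = r * (Phi n H s t u - Phi n (Cstar n C) s t u)"
        by (simp add: gn_def H_def r_def b_def)
      have glim_eq: "glim C a s t u = a s t u - (\<Sum>j\<in>UNIV. pdC C j u * a s t (vec1 j (u$j)))"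
        by (simp add: glim_def vec1_u)
      have pdb: "\<bar>pdC C j u\<bar> \<le> 1" for j by (rule pdC_bound[OF cop diff u])
      have gu: "vec1 j (u$j) \<in> unit_cube" for j using u by (intro cube_vec1) (auto simp: unit_cube_def)
      have sl: "s \<le> t" using st by (simp add: Delta_def)
      have fle: "\<lfloor>real n * s\<rfloor> \<le> \<lfloor>real n * t\<rfloor>" using sl by (intro floor_mono mult_left_mono) auto
      have lm_eq: "lm = (real_of_int \<lfloor>real n * t\<rfloor> - real_of_int \<lfloor>real n * s\<rfloor>) / real n"
        by (simp add: lm_def lam_def)
      have Cv1: "C (vec1 j v) = v" if "0 \<le> v" "v \<le> 1" for j v using cop that by (simp add: is_copula_def)
      have sum_le: "(\<Sum>j\<in>UNIV. f j) \<le> D * m" if "\<And>j. f j \<le> m" for f :: "'d \<Rightarrow> real" and m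
        using sum_bounded_above[of UNIV f m] that by (simp add: D_def)
      have glim_small: "\<bar>glim C a s t u\<bar> \<le> (D + 1) * eps" if sm: "\<And>x. x \<in> unit_cube \<Longrightarrow> \<bar>a s t x\<bar> < eps"
      proof -
        have "\<bar>pdC C j u * a s t (vec1 j (u$j))\<bar> \<le> eps" for j
        proof -
          have "\<bar>pdC C j u * a s t (vec1 j (u$j))\<bar> = \<bar>pdC C j u\<bar> * \<bar>a s t (vec1 j (u$j))\<bar>" by (simp add: abs_mult)
          also have "\<dots> \<le> 1 * eps" using pdb[of j] sm[OF gu[of j]] by (intro mult_mono) auto
          finally show ?thesis by simp
        qed
        then have "(\<Sum>j\<in>UNIV. \<bar>pdC C j u * a s t (vec1 j (u$j))\<bar>) \<le> D * eps"
          by (rule sum_le)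
        then have "\<bar>\<Sum>j\<in>UNIV. pdC C j u * a s t (vec1 j (u$j))\<bar> \<le> D * eps"
          using sum_abs[of "\<lambda>j. pdC C j u * a s t (vec1 j (u$j))" UNIV]
          by linarith
        then show ?thesis unfolding glim_eq using sm[OF u] by (simp add: algebra_simps abs_le_iff) linarith
      qed
      have eD: "(D + 1) * eps \<le> (D + 1) * (A + 8) * eps" using D1 A0 epos by (simp add: mult_le_cancel_left1 mult.assoc)
      show ?thesis
      proof (cases "\<lfloor>real n * s\<rfloor> < \<lfloor>real n * t\<rfloor>")
        case False
        then have feq: "\<lfloor>real n * s\<rfloor> = \<lfloor>real n * t\<rfloor>" using fle by simp
        then have lm0: "lm = 0" using lm_eq by simp
        have m0: "\<forall>v\<in>{0..1}. marg H j s t v = 0" for j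
          using Dn(2) st False unfolding isEstar_d_def isEstar_def by fastforce
        have In0: "In n (marg H j) s t (u$j) = 0" for j
        proof -
          have "{v \<in> {0..1}. marg H j s t v \<ge> lam n s t * u$j} = {0..1}"
            using m0[of j] lm0 by (auto simp: lm_def)
          then show ?thesis by (simp add: In_def)
        qed
        have z0: "(\<chi> j. (0::real)) = (0::real^'d)" by (simp add: vec_eq_iff)
        have b0: "b s t 0 = 0"
        proof (cases "s = t")
          case True then show ?thesis using bz[OF c0] by simp
        next
          case False then show ?thesis using bz[OF c0] sl by auto
        qed
        have "Phi n H s t u = 0" unfolding Phi_def In0 z0 using b0 lm0
          by (simp add: H_def Cstar_def lm_def)
        moreover have "Phi n (Cstar n C) s t u = 0" using lm0 by (simp add: Phi_def Cstar_def lm_def)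
        ultimately have gn0: "gn n C (alpha n) s t u = 0" using gn_eq by simp
        have "real n * t - real n * s < 1" using feq by linarith
        then have "t - s < 1 / real n" using n1 by (simp add: field_simps)
        then have "t - s < da" using nda da0 by linarith
        then have "\<bar>glim C a s t u\<bar> \<le> (D + 1) * eps" using glim_small B1[OF st] by blast
        then show ?thesis using gn0 ee2 eD by simp
      next
        case True
        have slt: "s < t" using True sl by (cases "s = t") auto
        have lm1: "lm \<ge> 1 / real n"
        proof -
          have "real_of_int \<lfloor>real n * t\<rfloor> - real_of_int \<lfloor>real n * s\<rfloor> \<ge> 1" using True by linarith
          then show ?thesis unfolding lm_eq using n1 by (simp add: divide_right_mono)
        qed
        have "1 / real n > 0" using n1 by simp
        then have lmpos: "lm > 0" using lm1 by linarith
        have lmts: "lm \<ge> t - s - 1 / real n"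
        proof -
          have "real_of_int \<lfloor>real n * t\<rfloor> - real_of_int \<lfloor>real n * s\<rfloor> \<ge> real n * t - 1 - real n * s" by linarith
          then have "lm \<ge> (real n * t - 1 - real n * s) / real n" unfolding lm_eq using n1 by (simp add: divide_right_mono)
          then show ?thesis using n1 by (simp add: diff_divide_distrib)
        qed
        define c where "c = r * lm"
        have c0: "c > 0" using r0 lmpos by (simp add: c_def)
        define G where "G j v = b s t (vec1 j v)" for j v
        have G0: "G j 0 = 0" for j
        proof -
          have "vec1 j 0 \<in> unit_cube" using cube_vec1[of 0 j] by simp
          moreover have "vec1 j 0 $ j = 0" by (simp add: vec1_def)
          ultimately
          show ?thesis using bz slt unfolding G_def by blast
        qed
        have G1: "G j 1 = 0" for j using bz[of "\<chi> j. 1"] slt by (simp add: G_def vec1_one unit_cube_def)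
        define q where "q j = In n (marg H j) s t (u$j)" for j
        have uj: "0 \<le> u$j" "u$j \<le> 1" for j using u by (auto simp: unit_cube_def)
        have qeq: "q j = Inf {v\<in>{0..1}. c * (v - u$j) \<ge> - G j v}" for j
        proof -
          have "{v \<in> {0..1}. marg H j s t v \<ge> lam n s t * u$j} = {v\<in>{0..1}. c * (v - u$j) \<ge> - G j v}"
          proof (intro Collect_cong conj_cong refl)
            fix v assume v: "v \<in> {0..(1::real)}"
            have "marg H j s t v = lm * v + G j v / r"
              using Cv1[of v j] v by (simp add: marg_def H_def Cstar_def lm_def G_def)
            have "(marg H j s t v \<ge> lm * u$j) = (r * marg H j s t v \<ge> r * (lm * u$j))"
              using r0 by simp
            also have "r * marg H j s t v = c * v + G j v"
              using r0 \<open>marg H j s t v = lm * v + G j v / r\<close> by (simp add: c_def field_simps)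
            finally show "(marg H j s t v \<ge> lam n s t * u$j) = (c * (v - u$j) \<ge> - G j v)"
              by (simp add: c_def lm_def[symmetric] algebra_simps)
          qed
          then show ?thesis by (simp add: q_def In_def)
        qed
        have qr: "0 \<le> q j \<and> q j \<le> 1" for j unfolding qeq by (rule quant_range[OF c0 uj G0 G1])
        define vs where "vs = (\<chi> j. q j)"
        have vsc: "vs \<in> unit_cube" using qr by (simp add: vs_def unit_cube_def)
        have PhiH: "Phi n H s t u = lm * C vs + b s t vs / r"
          by (simp add: Phi_def H_def Cstar_def lm_def vs_def q_def)
        have InC: "In n (marg (Cstar n C) j) s t (u$j) = u$j" for j
        proof -
          have "{v \<in> {0..1}. marg (Cstar n C) j s t v \<ge> lam n s t * u$j} = {u$j..1}"
          proof (intro set_eqI iffI)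
            fix v assume "v \<in> {v \<in> {0..1}. marg (Cstar n C) j s t v \<ge> lam n s t * u$j}"
            then have "v \<in> {0..1}" "lm * v \<ge> lm * u$j" using Cv1[of v j] by (auto simp: marg_def Cstar_def lm_def)
            then show "v \<in> {u$j..1}" using lmpos by simp
          next
            fix v assume "v \<in> {u$j..1}"
            then show "v \<in> {v \<in> {0..1}. marg (Cstar n C) j s t v \<ge> lam n s t * u$j}"
              using Cv1[of v j] uj[of j] lmpos by (auto simp: marg_def Cstar_def lm_def[symmetric])
          qed
          then show ?thesis using uj[of j] by (simp add: In_def)
        qed
        have PhiC: "Phi n (Cstar n C) s t u = lm * C u"
        proof -
          have "(\<chi> j. In n (marg (Cstar n C) j) s t (u$j)) = u" using InC by (simp add: vec_eq_iff)
          then show ?thesis by (simp add: Phi_def Cstar_def lm_def)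
        qed
        have gneq: "gn n C (alpha n) s t u = c * (C vs - C u) + b s t vs"
          unfolding gn_eq PhiH PhiC c_def using r0 by (simp add: field_simps)
        have vsj: "vs $ j = q j" for j by (simp add: vs_def)
        show ?thesis
        proof (cases "t - s < da")
          case True
          have aeps: "\<bar>a s t x\<bar> < eps" if "x \<in> unit_cube" for x using B1[OF st True that] .
          have Gb: "\<forall>v\<in>{0..1}. \<bar>G j v\<bar> \<le> 2 * eps" for j
          proof
            fix v :: real assume "v \<in> {0..1}"
            then have x: "vec1 j v \<in> unit_cube" by (simp add: cube_vec1)
            show "\<bar>G j v\<bar> \<le> 2 * eps" using hb[OF x] aeps[OF x] unfolding G_def by linarith
          qed
          have Dj: "\<bar>c * (q j - u$j)\<bar> \<le> 2 * eps" for j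
            unfolding qeq by (rule quant_bound[OF c0 uj G0 G1 Gb])
          have lip: "\<bar>C vs - C u - (\<Sum>j\<in>UNIV. 0 * (vs$j - u$j))\<bar> \<le> (\<Sum>j\<in>UNIV. \<bar>vs$j - u$j\<bar>)"
          proof (rule telescope[OF u vsc])
            fix j :: 'd and x :: "real^'d" assume x: "x \<in> unit_cube"
            show "\<bar>C (upd x j (vs$j)) - C (upd x j (u$j)) - 0 * (vs$j - u$j)\<bar> \<le> \<bar>vs$j - u$j\<bar>"
              using cop_lip_abs[OF cop x, of "u$j" "vs$j" j] uj[of j] qr[of j] by (simp add: vsj)
          qed
          have "c * \<bar>C vs - C u\<bar> \<le> c * (\<Sum>j\<in>UNIV. \<bar>q j - u$j\<bar>)"
            using lip c0 by (simp add: vsj)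
          also have "\<dots> = (\<Sum>j\<in>UNIV. \<bar>c * (q j - u$j)\<bar>)"
            using c0 by (simp add: sum_distrib_left abs_mult)
          also have "\<dots> \<le> D * (2 * eps)" by (rule sum_le[OF Dj])
          finally have t1: "\<bar>c * (C vs - C u)\<bar> \<le> D * (2 * eps)" using c0 by (simp add: abs_mult)
          have t2: "\<bar>b s t vs\<bar> \<le> 2 * eps" using hb[OF vsc] aeps[OF vsc] by linarith
          have t3: "\<bar>glim C a s t u\<bar> \<le> (D + 1) * eps" using glim_small aeps by blast
          have "\<bar>gn n C (alpha n) s t u - glim C a s t u\<bar> \<le> D * (2 * eps) + 2 * eps + (D + 1) * eps"
            unfolding gneq using t1 t2 t3 by linarith
          also have "\<dots> = 3 * ((D + 1) * eps)" by (simp add: algebra_simps)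
          also have "\<dots> \<le> (A + 8) * ((D + 1) * eps)" using A0 D1 epos by (intro mult_right_mono) auto
          finally show ?thesis using ee2 by (simp add: algebra_simps)
        next
          case False
          have lmda: "lm \<ge> da / 2" using lmts nda False by linarith
          have Z0: "Z \<ge> 0" using A0 da0 tau0 by (simp add: Z_def)
          have "Z * (da / 2) \<le> r * lm" using rZ lmda Z0 da0 r0 unfolding r_def
            by (intro mult_mono) auto
          moreover have "Z * (da / 2) = (A + 1) / tau" using da0 tau0 by (simp add: Z_def field_simps)
          ultimately have "(A + 1) / tau \<le> c" unfolding c_def by linarith
          then have cbig: "A + 1 \<le> c * tau" using tau0 by (simp add: pos_divide_le_eq)
          have GbA: "\<forall>v\<in>{0..1}. \<bar>G j v\<bar> \<le> A + 1" for j
          proof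
            fix v :: real assume "v \<in> {0..1}"
            then have x: "vec1 j v \<in> unit_cube" by (simp add: cube_vec1)
            show "\<bar>G j v\<bar> \<le> A + 1" using hb[OF x] Ast[OF x] e1 unfolding G_def by linarith
          qed
          have DjA: "\<bar>c * (q j - u$j)\<bar> \<le> A + 1" for j
            unfolding qeq by (rule quant_bound[OF c0 uj G0 G1 GbA])
          have qtau: "\<bar>q j - u$j\<bar> \<le> tau" for j
          proof -
            have "c * \<bar>q j - u$j\<bar> \<le> A + 1" using DjA[of j] c0 by (simp add: abs_mult)
            then have "c * \<bar>q j - u$j\<bar> \<le> c * tau" using cbig by linarith
            then show ?thesis using c0 by simp
          qed
          have "1 * tau \<le> D * tau" by (rule mult_right_mono) (use D1 tau0 in auto)
          then have taud: "tau \<le> da / 2" using tau1(1) by linarith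
          have sq: "(\<Sum>j\<in>UNIV. \<bar>q j - u$j\<bar>) \<le> D * tau" by (rule sum_le[OF qtau])
          have dvs: "dist vs u < da"
            using dist_l1[of vs u] sq tau1(1) da0 by (simp add: vsj)
          define g0 where "g0 j = a s t (vec1 j (u$j))" for j
          have Dg: "\<bar>c * (q j - u$j) + g0 j\<bar> \<le> 2 * eps" for j
          proof -
            have h: "\<forall>v\<in>{0..1}. \<bar>v - u$j\<bar> < da \<longrightarrow> \<bar>G j v - g0 j\<bar> \<le> 2 * eps"
            proof (intro ballI impI)
              fix v :: real assume v: "v \<in> {0..1}" "\<bar>v - u$j\<bar> < da"
              then have x: "vec1 j v \<in> unit_cube" by (simp add: cube_vec1)
              have "dist (vec1 j v) (vec1 j (u$j)) < da" using dist_vec1[of j v "u$j"] v by simp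
              then have "\<bar>a s t (vec1 j v) - g0 j\<bar> < eps" unfolding g0_def by (rule A2[OF st x gu])
              then show "\<bar>G j v - g0 j\<bar> \<le> 2 * eps" using hb[OF x] unfolding G_def by linarith
            qed
            have "\<bar>q j - u$j\<bar> < da" using qtau[of j] taud da0 by linarith
            then show ?thesis using quant_approx[OF c0 uj G0 G1 h] unfolding qeq by blast
          qed
          have edge: "\<bar>g0 j\<bar> < eps" if ne: "\<not> (eta \<le> u$j \<and> u$j \<le> 1 - eta)" for j
          proof (cases "u$j < eta")
            case True
            have x0: "vec1 j 0 \<in> unit_cube" using cube_vec1[of 0 j] by simp
            have "dist (vec1 j (u$j)) (vec1 j 0) < da" using dist_vec1[of j "u$j" 0] True uj[of j] eta by simp
            then have "\<bar>g0 j - a s t (vec1 j 0)\<bar> < eps" unfolding g0_def by (rule A2[OF st gu x0])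
            moreover have "a s t (vec1 j 0) = 0" using az[OF st x0] slt by (auto simp: vec1_def)
            ultimately show ?thesis by simp
          next
            case False
            then have uj1: "u$j > 1 - eta" using ne by simp
            have x1: "vec1 j 1 \<in> unit_cube" using cube_vec1[of 1 j] by simp
            have "dist (vec1 j (u$j)) (vec1 j 1) < da" using dist_vec1[of j "u$j" 1] uj1 uj[of j] eta by simp
            then have "\<bar>g0 j - a s t (vec1 j 1)\<bar> < eps" unfolding g0_def by (rule A2[OF st gu x1])
            moreover have "a s t (vec1 j 1) = 0" using az[OF st x1] slt by (simp add: vec1_one)
            ultimately show ?thesis by simp
          qed
          define E where "E j = (if eta \<le> u$j \<and> u$j \<le> 1 - eta then eps else 2) * \<bar>vs$j - u$j\<bar>" for j
          have tel: "\<bar>C vs - C u - (\<Sum>j\<in>UNIV. pdC C j u * (vs$j - u$j))\<bar> \<le> (\<Sum>j\<in>UNIV. E j)"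
          proof (rule telescope[OF u vsc])
            fix j :: 'd and x :: "real^'d" assume x: "x \<in> unit_cube" and xs: "\<forall>i. x$i = u$i \<or> x$i = vs$i"
            show "\<bar>C (upd x j (vs$j)) - C (upd x j (u$j)) - pdC C j u * (vs$j - u$j)\<bar> \<le> E j"
            proof (cases "eta \<le> u$j \<and> u$j \<le> 1 - eta")
              case True
              obtain xi where xi: "\<bar>xi - u$j\<bar> \<le> \<bar>vs$j - u$j\<bar>"
                "C (upd x j (vs$j)) - C (upd x j (u$j)) = pdC C j (upd x j xi) * (vs$j - u$j)"
                using cop_mvt[OF cop diff x, of "u$j" "vs$j" j] uj[of j] qr[of j] by (auto simp: vsj)
              have xit: "\<bar>xi - u$j\<bar> \<le> tau" using xi(1) qtau[of j] by (simp add: vsj)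
              then have xir: "eta/2 \<le> xi" "xi \<le> 1 - eta/2" using True tau1(3) by linarith+
              have xK: "upd x j xi \<in> K j" unfolding K_def using xir eta x by (auto intro: cube_upd)
              have uK: "u \<in> K j" unfolding K_def using True u eta by auto
              have "(\<Sum>i\<in>UNIV. \<bar>upd x j xi $ i - u$i\<bar>) \<le> (\<Sum>i\<in>UNIV. \<bar>q i - u$i\<bar>)"
              proof (rule sum_mono)
                fix i show "\<bar>upd x j xi $ i - u$i\<bar> \<le> \<bar>q i - u$i\<bar>"
                  using xs[rule_format, of i] xi(1) by (auto simp: vsj)
              qed
              then have "dist (upd x j xi) u < dp j"
                using dist_l1[of "upd x j xi" u] sq tau1(2) dc0 dcle[of j] by linarith
              then have pd: "\<bar>pdC C j (upd x j xi) - pdC C j u\<bar> < eps" by (rule dp(2)[OF xK uK])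
              have "\<bar>C (upd x j (vs$j)) - C (upd x j (u$j)) - pdC C j u * (vs$j - u$j)\<bar>
                  = \<bar>pdC C j (upd x j xi) - pdC C j u\<bar> * \<bar>vs$j - u$j\<bar>"
                unfolding xi(2) by (simp add: abs_mult[symmetric] algebra_simps)
              also have "\<dots> \<le> eps * \<bar>vs$j - u$j\<bar>" using pd by (intro mult_right_mono) auto
              finally show ?thesis using True by (simp add: E_def)
            next
              case False
              have h1: "\<bar>C (upd x j (vs$j)) - C (upd x j (u$j))\<bar> \<le> \<bar>vs$j - u$j\<bar>"
                using cop_lip_abs[OF cop x, of "u$j" "vs$j" j] uj[of j] qr[of j] by (simp add: vsj)
              have h2: "\<bar>pdC C j u * (vs$j - u$j)\<bar> \<le> \<bar>vs$j - u$j\<bar>"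
                using pdb[of j] by (simp add: abs_mult mult_left_le_one_le)
              have "\<bar>C (upd x j (vs$j)) - C (upd x j (u$j)) - pdC C j u * (vs$j - u$j)\<bar>
                 \<le> \<bar>C (upd x j (vs$j)) - C (upd x j (u$j))\<bar> + \<bar>pdC C j u * (vs$j - u$j)\<bar>"
                by (rule abs_triangle_ineq4)
              also have "\<dots> \<le> \<bar>vs$j - u$j\<bar> + \<bar>vs$j - u$j\<bar>" by (rule add_mono[OF h1 h2])
              also have "\<dots> = E j" unfolding E_def if_not_P[OF False] by simp
              finally show ?thesis .
            qed
          qed
          have cE: "c * E j \<le> (A + 6) * eps" for j
          proof (cases "eta \<le> u$j \<and> u$j \<le> 1 - eta")
            case True
            have "c * E j = eps * \<bar>c * (q j - u$j)\<bar>" using True c0 by (simp add: E_def vsj abs_mult)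
            also have "\<dots> \<le> eps * (A + 1)" using DjA[of j] epos by (intro mult_left_mono) auto
            also have "\<dots> \<le> (A + 6) * eps" using epos by (simp add: algebra_simps)
            finally show ?thesis .
          next
            case False
            have "c * E j = 2 * \<bar>c * (q j - u$j)\<bar>" unfolding E_def if_not_P[OF False] using c0 by (simp add: vsj abs_mult)
            also have "\<dots> \<le> 6 * eps" using Dg[of j] edge[OF False] by linarith
            also have "\<dots> \<le> (A + 6) * eps" using epos A0 by simp
            finally show ?thesis .
          qed
          define T1 where "T1 = c * (C vs - C u) - (\<Sum>j\<in>UNIV. pdC C j u * (c * (q j - u$j)))"
          define T2 where "T2 = (\<Sum>j\<in>UNIV. pdC C j u * (c * (q j - u$j) + g0 j))"
          have T1eq: "T1 = c * (C vs - C u - (\<Sum>j\<in>UNIV. pdC C j u * (vs$j - u$j)))"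
            unfolding T1_def by (simp add: right_diff_distrib sum_distrib_left vsj algebra_simps)
          have "\<bar>T1\<bar> \<le> c * (\<Sum>j\<in>UNIV. E j)" unfolding T1eq using tel c0 by (simp add: abs_mult)
          also have "\<dots> = (\<Sum>j\<in>UNIV. c * E j)" by (simp add: sum_distrib_left)
          also have "\<dots> \<le> D * ((A + 6) * eps)" by (rule sum_le[OF cE])
          finally have t1: "\<bar>T1\<bar> \<le> D * ((A + 6) * eps)" .
          have "\<bar>T2\<bar> \<le> (\<Sum>j\<in>UNIV. \<bar>pdC C j u * (c * (q j - u$j) + g0 j)\<bar>)" unfolding T2_def by (rule sum_abs)
          also have "\<dots> \<le> D * (2 * eps)"
          proof (rule sum_le)
            fix j
            have "\<bar>pdC C j u * (c * (q j - u$j) + g0 j)\<bar> = \<bar>pdC C j u\<bar> * \<bar>c * (q j - u$j) + g0 j\<bar>" by (simp add: abs_mult)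
            also have "\<dots> \<le> 1 * (2 * eps)" using pdb[of j] Dg[of j] by (intro mult_mono) auto
            finally show "\<bar>pdC C j u * (c * (q j - u$j) + g0 j)\<bar> \<le> 2 * eps" by simp
          qed
          finally have t2: "\<bar>T2\<bar> \<le> D * (2 * eps)" .
          have t3: "\<bar>b s t vs - a s t vs\<bar> < eps" by (rule hb[OF vsc])
          have t4: "\<bar>a s t vs - a s t u\<bar> < eps" by (rule A2[OF st vsc u dvs])
          have dec: "gn n C (alpha n) s t u - glim C a s t u = T1 + T2 + (b s t vs - a s t vs) + (a s t vs - a s t u)"
          proof -
            have "T2 = (\<Sum>j\<in>UNIV. pdC C j u * (c * (q j - u$j))) + (\<Sum>j\<in>UNIV. pdC C j u * g0 j)"
              unfolding T2_def by (simp add: distrib_left sum.distrib)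
            then show ?thesis unfolding gneq glim_eq T1_def g0_def by simp
          qed
          have "\<bar>gn n C (alpha n) s t u - glim C a s t u\<bar> \<le> D * ((A + 6) * eps) + D * (2 * eps) + eps + eps"
            unfolding dec using t1 t2 t3 t4 by linarith
          also have "\<dots> = D * (A + 8) * eps + 2 * eps" by (simp add: algebra_simps)
          also have "\<dots> \<le> D * (A + 8) * eps + (A + 8) * eps" using A0 epos by (intro add_left_mono mult_right_mono) auto
          also have "\<dots> = (D + 1) * (A + 8) * eps" by (simp add: algebra_simps)
          finally show ?thesis using ee2 by linarith
        qed
      qed
    qed
    show "\<forall>(s,t)\<in>Delta. \<forall>u\<in>unit_cube. \<bar>gn n C (alpha n) s t u - glim C a s t u\<bar> < e"
      using core by blast
  qed
qed


end
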